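(* Let $d\ge 2$ and let $\mu$ be a minimizer, over all Borel probability measures on $\mathbb{S}^{d-1}$, of the three-point $1$-frame energy $$I(\mu)=\int_{\mathbb{S}^{d-1}}\int_{\mathbb{S}^{d-1}}\int_{\mathbb{S}^{d-1}}\left|\langle x,y\rangle\langle x,z\rangle\langle y,z\rangle\right|\,d\mu(x)\,d\mu(y)\,d\mu(z).$$ Then for every $x$ in the support of $\mu$ there exists $y$ in the support of $\mu$ with $\langle x,y\rangle=0$.
   Context: $\mathbb{S}^{d-1}$ is the unit sphere of $\mathbb{R}^d$ and $\langle\cdot,\cdot\rangle$ the Euclidean inner product. *)

theory Defs
  imports "HOL-Probability.Probability"
begin

definition sphere_borel_prob :: "'a::euclidean_space measure \<Rightarrow> bool" where
  "sphere_borel_prob \<mu> \<longleftrightarrow>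
     prob_space \<mu> \<and> sets \<mu> = sets borel \<and> emeasure \<mu> (sphere 0 1) = 1"

definition frame_energy3 :: "'a::euclidean_space measure \<Rightarrow> ennreal" where
  "frame_energy3 \<mu> =
     (\<integral>\<^sup>+ x. \<integral>\<^sup>+ y. \<integral>\<^sup>+ z. ennreal \<bar>(x \<bullet> y) * (x \<bullet> z) * (y \<bullet> z)\<bar> \<partial>\<mu> \<partial>\<mu> \<partial>\<mu>)"

definition msupport :: "'a::metric_space measure \<Rightarrow> 'a set" where
  "msupport \<mu> = {x. \<forall>e>0. emeasure \<mu> (ball x e) > 0}"

end

theory Submission
  imports Defs
begin

locale SB =
  fixes M :: "'a::euclidean_space measure"
  assumes SB: "sphere_borel_prob M"
begin

sublocale prob_space M using SB unfolding sphere_borel_prob_def by auto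

lemma sets_M: "sets M = sets borel" using SB unfolding sphere_borel_prob_def by auto

lemma AE_sph: "AE y in M. norm y = 1"
proof -
  have "sphere 0 1 \<in> sets M" using sets_M by simp
  moreover have "emeasure M (sphere 0 1) = 1" using SB unfolding sphere_borel_prob_def by auto
  ultimately have "prob (sphere 0 1) = 1" by (simp add: emeasure_eq_measure)
  from AE_prob_1[OF this] show ?thesis by eventually_elim simp
qed

lemma meas_cont: "continuous_on UNIV f \<Longrightarrow> f \<in> borel_measurable M"
  using borel_measurable_continuous_onI measurable_cong_sets[OF sets_M refl] by blast

lemma sets_MM: "sets (M \<Otimes>\<^sub>M M) = sets (borel :: ('a \<times> 'a) measure)"
  using sets_pair_measure_cong[OF sets_M sets_M] borel_prod by metis

lemma sets_MMM: "sets ((M \<Otimes>\<^sub>M M) \<Otimes>\<^sub>M M) = sets (borel :: (('a \<times> 'a) \<times> 'a) measure)"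
  using sets_pair_measure_cong[OF sets_MM sets_M] borel_prod by metis

lemma meas_cont2: "continuous_on UNIV f \<Longrightarrow> f \<in> borel_measurable (M \<Otimes>\<^sub>M M)"
  using borel_measurable_continuous_onI measurable_cong_sets[OF sets_MM refl] by blast

lemma meas_cont3: "continuous_on UNIV f \<Longrightarrow> f \<in> borel_measurable ((M \<Otimes>\<^sub>M M) \<Otimes>\<^sub>M M)"
  using borel_measurable_continuous_onI measurable_cong_sets[OF sets_MMM refl] by blast

lemma int_bdd:
  fixes f :: "'a \<Rightarrow> real"
  assumes "f \<in> borel_measurable M" "\<And>y. norm y = 1 \<Longrightarrow> \<bar>f y\<bar> \<le> B"
  shows "integrable M f"
  apply (rule integrable_const_bound[where B=B])
  using AE_sph apply eventually_elim using assms(2) apply simp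
  using assms(1) .

lemma cont_bdd:
  fixes g :: "'b::topological_space \<Rightarrow> real"
  assumes "continuous_on UNIV g" "compact S"
  shows "\<exists>B. \<forall>x\<in>S. \<bar>g x\<bar> \<le> B"
proof -
  have "compact (g ` S)" using assms by (meson compact_continuous_image continuous_on_subset subset_UNIV)
  then obtain B where "\<forall>y\<in>g ` S. norm y \<le> B" using compact_imp_bounded bounded_iff by metis
  thus ?thesis by auto
qed

lemma int_cont:
  fixes f :: "'a \<Rightarrow> real"
  assumes "continuous_on UNIV f"
  shows "integrable M f"
proof -
  obtain B where "\<forall>x\<in>sphere (0::'a) 1. \<bar>f x\<bar> \<le> B" using cont_bdd[OF assms compact_sphere] by blast
  thus ?thesis by (intro int_bdd[of f B] meas_cont assms) auto
qed

lemma abs_int_le: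
  fixes g :: "'a \<Rightarrow> real"
  assumes "integrable M g" "AE x in M. \<bar>g x\<bar> \<le> B"
  shows "\<bar>integral\<^sup>L M g\<bar> \<le> B"
proof -
  have "\<bar>integral\<^sup>L M g\<bar> \<le> integral\<^sup>L M (\<lambda>x. \<bar>g x\<bar>)" by (rule integral_abs_bound)
  also have "\<dots> \<le> integral\<^sup>L M (\<lambda>x. B)"
    by (rule integral_mono_AE) (use assms in auto)
  finally show ?thesis using prob_space by simp
qed


lemma space_M: "space M = UNIV" using sets_eq_imp_space_eq[OF sets_M] by simp

lemma supp_pos: "x \<in> msupport M \<Longrightarrow> e > 0 \<Longrightarrow> emeasure M (ball x e) > 0"
  unfolding msupport_def by auto

lemma ball_trick:
  assumes "x \<in> msupport M" "e > 0" "AE b in M. P b"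
  shows "\<exists>b. dist x b < e \<and> P b"
proof (rule ccontr)
  assume H: "\<not> ?thesis"
  have "AE b in M. \<not> b \<in> ball x e" using assms(3) by eventually_elim (use H in auto)
  hence "emeasure M {b\<in>space M. b \<in> ball x e} = 0" by (rule emeasure_eq_0_AE)
  hence "emeasure M (ball x e) = 0" using space_M by (simp add: ball_def)
  with supp_pos[OF assms(1,2)] show False by simp
qed

lemma AE_supp: "AE y in M. y \<in> msupport M"
proof -
  define F where "F = {ball x e |x e. e > 0 \<and> emeasure M (ball x e) = 0}"
  have "\<And>S. S \<in> F \<Longrightarrow> open S" unfolding F_def by auto
  from Lindelof[OF this] obtain F' where F': "F' \<subseteq> F" "countable F'" "\<Union>F' = \<Union>F" by blast
  have "(\<Union>S\<in>F'. S) \<in> null_sets M"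
  proof (rule null_sets_UN'[OF F'(2)])
    fix S assume "S \<in> F'"
    then obtain x e where "S = ball x e" "emeasure M (ball x e) = 0" using F'(1) unfolding F_def by auto
    thus "S \<in> null_sets M" using sets_M by (simp add: null_sets_def)
  qed
  moreover have "{y\<in>space M. y \<notin> msupport M} \<subseteq> (\<Union>S\<in>F'. S)"
  proof
    fix y assume "y \<in> {y\<in>space M. y \<notin> msupport M}"
    then obtain e where "e > 0" "\<not> emeasure M (ball y e) > 0" unfolding msupport_def by auto
    hence "ball y e \<in> F" unfolding F_def by (auto simp: zero_less_iff_neq_zero)
    hence "y \<in> \<Union>F" using \<open>e > 0\<close> by (metis UnionI centre_in_ball)
    thus "y \<in> (\<Union>S\<in>F'. S)" using F'(3) by auto
  qed
  ultimately show ?thesis by (rule AE_I')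
qed

lemma supp_sphere: assumes "x \<in> msupport M" shows "norm x = 1"
proof (rule ccontr)
  assume ne: "norm x \<noteq> 1"
  define e where "e = \<bar>norm x - 1\<bar>"
  have e: "e > 0" using ne unfolding e_def by auto
  obtain b where b: "dist x b < e" "norm b = 1" using ball_trick[OF assms e AE_sph] by blast
  have "\<bar>norm x - norm b\<bar> \<le> dist x b" by (simp add: dist_norm norm_triangle_ineq3)
  with b show False unfolding e_def by simp
qed


lemma cont_bdd3:
  fixes f :: "'a \<Rightarrow> 'a \<Rightarrow> 'a \<Rightarrow> real"
  assumes C: "continuous_on UNIV (\<lambda>p. f (fst (fst p)) (snd (fst p)) (snd p))"
  shows "\<exists>B. \<forall>a b c. norm a = 1 \<longrightarrow> norm b = 1 \<longrightarrow> norm c = 1 \<longrightarrow> \<bar>f a b c\<bar> \<le> B"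
proof -
  have "compact ((sphere (0::'a) 1 \<times> sphere (0::'a) 1) \<times> sphere (0::'a) 1)"
    by (intro compact_Times compact_sphere)
  from cont_bdd[OF C this] obtain B where "\<forall>p\<in>(sphere (0::'a) 1 \<times> sphere 0 1) \<times> sphere 0 1.
      \<bar>f (fst (fst p)) (snd (fst p)) (snd p)\<bar> \<le> B" by blast
  thus ?thesis by force
qed

lemma cont_c1:
  fixes f :: "'a \<Rightarrow> 'a \<Rightarrow> 'a \<Rightarrow> real"
  assumes C: "continuous_on UNIV (\<lambda>p. f (fst (fst p)) (snd (fst p)) (snd p))"
  shows "continuous_on UNIV (\<lambda>c. f a b c)"
proof -
  have "continuous_on UNIV ((\<lambda>p. f (fst (fst p)) (snd (fst p)) (snd p)) \<circ> (\<lambda>c. ((a,b),c)))"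
    by (rule continuous_on_compose) (auto intro!: continuous_intros continuous_on_subset[OF C])
  thus ?thesis by (simp add: o_def)
qed

lemma cont_c2:
  fixes f :: "'a \<Rightarrow> 'a \<Rightarrow> 'a \<Rightarrow> real"
  assumes C: "continuous_on UNIV (\<lambda>p. f (fst (fst p)) (snd (fst p)) (snd p))"
  shows "continuous_on UNIV (\<lambda>p. f a (fst p) (snd p))"
proof -
  have "continuous_on UNIV ((\<lambda>p. f (fst (fst p)) (snd (fst p)) (snd p)) \<circ> (\<lambda>p. ((a,fst p),snd p)))"
    by (rule continuous_on_compose) (auto intro!: continuous_intros continuous_on_subset[OF C])
  thus ?thesis by (simp add: o_def)
qed

lemma G1:
  fixes f :: "'a \<Rightarrow> 'a \<Rightarrow> 'a \<Rightarrow> real"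
  assumes C: "continuous_on UNIV (\<lambda>p. f (fst (fst p)) (snd (fst p)) (snd p))"
  shows "integrable M (\<lambda>c. f a b c)"
  by (rule int_cont[OF cont_c1[OF C]])

lemma M2:
  fixes f :: "'a \<Rightarrow> 'a \<Rightarrow> 'a \<Rightarrow> real"
  assumes C: "continuous_on UNIV (\<lambda>p. f (fst (fst p)) (snd (fst p)) (snd p))"
  shows "(\<lambda>b. \<integral>c. f a b c \<partial>M) \<in> borel_measurable M"
proof -
  have "case_prod (\<lambda>b c. f a b c) \<in> borel_measurable (M \<Otimes>\<^sub>M M)"
    using meas_cont2[OF cont_c2[OF C, of a]] by (simp add: case_prod_unfold)
  thus ?thesis by (rule borel_measurable_lebesgue_integral)
qed

lemma G2:
  fixes f :: "'a \<Rightarrow> 'a \<Rightarrow> 'a \<Rightarrow> real"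
  assumes C: "continuous_on UNIV (\<lambda>p. f (fst (fst p)) (snd (fst p)) (snd p))"
  shows "integrable M (\<lambda>b. \<integral>c. f a b c \<partial>M)"
proof -
  have "compact (sphere (0::'a) 1 \<times> sphere (0::'a) 1)" by (intro compact_Times compact_sphere)
  from cont_bdd[OF cont_c2[OF C, of a] this] obtain B where
    B: "\<forall>p\<in>sphere (0::'a) 1 \<times> sphere 0 1. \<bar>f a (fst p) (snd p)\<bar> \<le> B" by blast
  show ?thesis
  proof (rule int_bdd[OF M2[OF C], where B=B])
    fix b :: 'a assume b: "norm b = 1"
    show "\<bar>\<integral>c. f a b c \<partial>M\<bar> \<le> B"
      by (rule abs_int_le[OF G1[OF C]]) (use AE_sph in eventually_elim, use B b in auto)
  qed
qed

lemma M3: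
  fixes f :: "'a \<Rightarrow> 'a \<Rightarrow> 'a \<Rightarrow> real"
  assumes C: "continuous_on UNIV (\<lambda>p. f (fst (fst p)) (snd (fst p)) (snd p))"
  shows "(\<lambda>a. \<integral>b. \<integral>c. f a b c \<partial>M \<partial>M) \<in> borel_measurable M"
proof -
  have "case_prod (\<lambda>ab c. f (fst ab) (snd ab) c) \<in> borel_measurable ((M \<Otimes>\<^sub>M M) \<Otimes>\<^sub>M M)"
    using meas_cont3[OF C] by (simp add: case_prod_unfold)
  hence "(\<lambda>ab. \<integral>c. f (fst ab) (snd ab) c \<partial>M) \<in> borel_measurable (M \<Otimes>\<^sub>M M)"
    by (rule borel_measurable_lebesgue_integral)
  hence "case_prod (\<lambda>a b. \<integral>c. f a b c \<partial>M) \<in> borel_measurable (M \<Otimes>\<^sub>M M)"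
    by (simp add: case_prod_unfold)
  thus ?thesis by (rule borel_measurable_lebesgue_integral)
qed

lemma G3:
  fixes f :: "'a \<Rightarrow> 'a \<Rightarrow> 'a \<Rightarrow> real"
  assumes C: "continuous_on UNIV (\<lambda>p. f (fst (fst p)) (snd (fst p)) (snd p))"
  shows "integrable M (\<lambda>a. \<integral>b. \<integral>c. f a b c \<partial>M \<partial>M)"
proof -
  obtain B where B: "\<forall>a b c. norm a = 1 \<longrightarrow> norm b = 1 \<longrightarrow> norm c = 1 \<longrightarrow> \<bar>f a b c\<bar> \<le> B"
    using cont_bdd3[OF C] by blast
  show ?thesis
  proof (rule int_bdd[OF M3[OF C], where B=B])
    fix a :: 'a assume a: "norm a = 1"
    show "\<bar>\<integral>b. \<integral>c. f a b c \<partial>M \<partial>M\<bar> \<le> B"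
    proof (rule abs_int_le[OF G2[OF C]])
      show "AE b in M. \<bar>\<integral>c. f a b c \<partial>M\<bar> \<le> B"
        using AE_sph
      proof eventually_elim
        fix b :: 'a assume b: "norm b = 1"
        show "\<bar>\<integral>c. f a b c \<partial>M\<bar> \<le> B"
          by (rule abs_int_le[OF G1[OF C]]) (use AE_sph in eventually_elim, use B a b in auto)
      qed
    qed
  qed
qed

lemma T_add:
  fixes f g :: "'a \<Rightarrow> 'a \<Rightarrow> 'a \<Rightarrow> real"
  assumes C: "continuous_on UNIV (\<lambda>p. f (fst (fst p)) (snd (fst p)) (snd p))"
    and D: "continuous_on UNIV (\<lambda>p. g (fst (fst p)) (snd (fst p)) (snd p))"
  shows "(\<integral>a. \<integral>b. \<integral>c. f a b c + g a b c \<partial>M \<partial>M \<partial>M) =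
     (\<integral>a. \<integral>b. \<integral>c. f a b c \<partial>M \<partial>M \<partial>M) + (\<integral>a. \<integral>b. \<integral>c. g a b c \<partial>M \<partial>M \<partial>M)"
  by (simp add: Bochner_Integration.integral_add G1[OF C] G1[OF D] G2[OF C] G2[OF D] G3[OF C] G3[OF D])

lemma T_nn:
  fixes f :: "'a \<Rightarrow> 'a \<Rightarrow> 'a \<Rightarrow> real"
  assumes C: "continuous_on UNIV (\<lambda>p. f (fst (fst p)) (snd (fst p)) (snd p))"
    and nn: "\<And>a b c. f a b c \<ge> 0"
  shows "(\<integral>\<^sup>+a. \<integral>\<^sup>+b. \<integral>\<^sup>+c. ennreal (f a b c) \<partial>M \<partial>M \<partial>M) = ennreal (\<integral>a. \<integral>b. \<integral>c. f a b c \<partial>M \<partial>M \<partial>M)"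
proof -
  have 1: "\<And>a b. (\<integral>\<^sup>+c. ennreal (f a b c) \<partial>M) = ennreal (\<integral>c. f a b c \<partial>M)"
    by (rule nn_integral_eq_integral[OF G1[OF C]]) (simp add: nn)
  have 2: "\<And>a. (\<integral>\<^sup>+b. ennreal (\<integral>c. f a b c \<partial>M) \<partial>M) = ennreal (\<integral>b. \<integral>c. f a b c \<partial>M \<partial>M)"
    by (rule nn_integral_eq_integral[OF G2[OF C]]) (simp add: nn integral_nonneg)
  have 3: "(\<integral>\<^sup>+a. ennreal (\<integral>b. \<integral>c. f a b c \<partial>M \<partial>M) \<partial>M) = ennreal (\<integral>a. \<integral>b. \<integral>c. f a b c \<partial>M \<partial>M \<partial>M)"
    by (rule nn_integral_eq_integral[OF G3[OF C]]) (simp add: nn integral_nonneg)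
  show ?thesis by (simp add: 1 2 3)
qed

lemma T_zero:
  fixes f :: "'a \<Rightarrow> 'a \<Rightarrow> 'a \<Rightarrow> real"
  assumes C: "continuous_on UNIV (\<lambda>p. f (fst (fst p)) (snd (fst p)) (snd p))"
    and nn: "\<And>a b c. f a b c \<ge> 0"
    and z: "(\<integral>a. \<integral>b. \<integral>c. f a b c \<partial>M \<partial>M \<partial>M) = 0"
  shows "AE a in M. AE b in M. AE c in M. f a b c = 0"
proof -
  have "AE a in M. (\<integral>b. \<integral>c. f a b c \<partial>M \<partial>M) = 0"
    using z integral_nonneg_eq_0_iff_AE[OF G3[OF C]] by (simp add: nn integral_nonneg)
  thus ?thesis
  proof eventually_elim
    fix a assume "(\<integral>b. \<integral>c. f a b c \<partial>M \<partial>M) = 0"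
    hence "AE b in M. (\<integral>c. f a b c \<partial>M) = 0"
      using integral_nonneg_eq_0_iff_AE[OF G2[OF C]] by (simp add: nn integral_nonneg)
    thus "AE b in M. AE c in M. f a b c = 0"
    proof eventually_elim
      fix b assume "(\<integral>c. f a b c \<partial>M) = 0"
      thus "AE c in M. f a b c = 0"
        using integral_nonneg_eq_0_iff_AE[OF G1[OF C]] by (simp add: nn)
    qed
  qed
qed



definition Mf :: "'a \<Rightarrow> 'a \<Rightarrow> real" where
  "Mf u v = (\<integral>y. (y \<bullet> u) * (y \<bullet> v) \<partial>M)"

lemma Mf_int: "integrable M (\<lambda>y. (y \<bullet> u) * (y \<bullet> v))"
  by (rule int_cont) (intro continuous_intros)

lemma Mf_sym: "Mf u v = Mf v u"
  unfolding Mf_def by (simp add: mult.commute)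

lemma inner_exp: "(y::'a) \<bullet> v = (\<Sum>j\<in>Basis. (v \<bullet> j) * (y \<bullet> j))"
  by (subst euclidean_inner) (simp add: mult.commute)

lemma Mf_lin2: "Mf u v = (\<Sum>j\<in>Basis. (v \<bullet> j) * Mf u j)"
proof -
  have "Mf u v = (\<integral>y. (\<Sum>j\<in>Basis. (v \<bullet> j) * ((y \<bullet> u) * (y \<bullet> j))) \<partial>M)"
    unfolding Mf_def by (rule Bochner_Integration.integral_cong[OF refl])
      (subst inner_exp[of _ v], simp add: sum_distrib_left algebra_simps)
  also have "\<dots> = (\<Sum>j\<in>Basis. (v \<bullet> j) * Mf u j)"
    unfolding Mf_def by (simp add: Mf_int)
  finally show ?thesis .
qed

lemma Mf_lin1: "Mf u v = (\<Sum>i\<in>Basis. (u \<bullet> i) * Mf i v)"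
  using Mf_lin2[of v u] by (simp add: Mf_sym)

lemma Mf_bil: "Mf u v = (\<Sum>i\<in>Basis. \<Sum>j\<in>Basis. (u \<bullet> i) * (v \<bullet> j) * Mf i j)"
  apply (subst Mf_lin1)
  apply (subst Mf_lin2)
  by (simp add: sum_distrib_left mult.assoc)

lemma Mf_trace: "(\<Sum>i\<in>Basis. Mf i i) = 1"
proof -
  have "(\<Sum>i\<in>Basis. Mf i i) = (\<integral>y. (\<Sum>i\<in>Basis. (y \<bullet> i) * (y \<bullet> i)) \<partial>M)"
    unfolding Mf_def by (simp add: Mf_int)
  also have "\<dots> = (\<integral>y. 1 \<partial>M)"
  proof (rule integral_cong_AE)
    show "AE y in M. (\<Sum>i\<in>Basis. (y \<bullet> i) * (y \<bullet> i)) = 1"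
      using AE_sph by eventually_elim (simp add: euclidean_inner[symmetric] power2_norm_eq_inner[symmetric])
  qed (auto intro!: meas_cont continuous_intros)
  finally show ?thesis using prob_space by simp
qed

definition K :: "'a \<Rightarrow> real" where "K a = (\<Sum>j\<in>Basis. (Mf a j)\<^sup>2)"

lemma K_eq: "K a = (\<Sum>j\<in>Basis. (\<Sum>i\<in>Basis. (a \<bullet> i) * Mf i j)\<^sup>2)"
  unfolding K_def by (subst Mf_lin1) simp

lemma K_cont: "continuous_on UNIV K"
  unfolding K_eq[abs_def] by (intro continuous_intros)

lemma h_eq: "Mf a a = (\<Sum>i\<in>Basis. \<Sum>j\<in>Basis. (a \<bullet> i) * (a \<bullet> j) * Mf i j)"
  by (rule Mf_bil)

lemma h_cont: "continuous_on UNIV (\<lambda>a. Mf a a)"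
  unfolding h_eq by (intro continuous_intros)

definition T :: "'a \<Rightarrow> 'a \<Rightarrow> 'a \<Rightarrow> real" where
  "T a b c = (a \<bullet> b) * (a \<bullet> c) * (b \<bullet> c)"

lemma T_cont: "continuous_on UNIV (\<lambda>p. T (fst (fst p)) (snd (fst p)) (snd p))"
  unfolding T_def by (intro continuous_intros)

lemma I1T: "(\<integral>c. T a b c \<partial>M) = (a \<bullet> b) * Mf a b"
proof -
  have "(\<integral>c. T a b c \<partial>M) = (\<integral>c. (a \<bullet> b) * ((c \<bullet> a) * (c \<bullet> b)) \<partial>M)"
    unfolding T_def by (simp add: inner_commute mult.assoc)
  thus ?thesis unfolding Mf_def by simp
qed

lemma I2T: "(\<integral>b. (a \<bullet> b) * Mf a b \<partial>M) = K a"
proof -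
  have "(\<integral>b. (a \<bullet> b) * Mf a b \<partial>M) = (\<integral>b. (\<Sum>j\<in>Basis. Mf a j * ((b \<bullet> a) * (b \<bullet> j))) \<partial>M)"
    by (rule Bochner_Integration.integral_cong[OF refl])
      (subst Mf_lin2, simp add: sum_distrib_left inner_commute algebra_simps)
  also have "\<dots> = (\<Sum>j\<in>Basis. Mf a j * Mf a j)"
    unfolding Mf_def by (simp add: Mf_int)
  finally show ?thesis unfolding K_def by (simp add: power2_eq_square)
qed

lemma I3T: "(\<integral>a. \<integral>b. \<integral>c. T a b c \<partial>M \<partial>M \<partial>M) = (\<integral>a. K a \<partial>M)"
  by (simp add: I1T I2T)

lemma int_h: "(\<integral>a. Mf a a \<partial>M) = (\<Sum>i\<in>Basis. \<Sum>j\<in>Basis. (Mf i j)\<^sup>2)"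
proof -
  have "(\<integral>a. Mf a a \<partial>M) = (\<integral>a. (\<Sum>i\<in>Basis. \<Sum>j\<in>Basis. Mf i j * ((a \<bullet> i) * (a \<bullet> j))) \<partial>M)"
    by (subst h_eq) (simp add: algebra_simps)
  also have "\<dots> = (\<Sum>i\<in>Basis. \<Sum>j\<in>Basis. Mf i j * Mf i j)"
    unfolding Mf_def by (simp add: Mf_int)
  finally show ?thesis by (simp add: power2_eq_square)
qed

lemma jensen_sq:
  fixes g :: "'a \<Rightarrow> real"
  assumes "integrable M g" "integrable M (\<lambda>x. (g x)\<^sup>2)"
  shows "(integral\<^sup>L M g)\<^sup>2 \<le> (\<integral>x. (g x)\<^sup>2 \<partial>M)"
proof -
  define c where "c = integral\<^sup>L M g"
  have "0 \<le> (\<integral>x. (g x - c)\<^sup>2 \<partial>M)" by (rule Bochner_Integration.integral_nonneg) simp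
  also have "(\<integral>x. (g x - c)\<^sup>2 \<partial>M) = (\<integral>x. (g x)\<^sup>2 \<partial>M) - 2 * c * integral\<^sup>L M g + c\<^sup>2"
  proof -
    have "(\<integral>x. (g x - c)\<^sup>2 \<partial>M) = (\<integral>x. ((g x)\<^sup>2 - (2 * c) * g x) + c\<^sup>2 \<partial>M)"
      by (simp add: power2_diff algebra_simps)
    also have "\<dots> = (\<integral>x. (g x)\<^sup>2 \<partial>M) - 2 * c * integral\<^sup>L M g + c\<^sup>2"
      using assms prob_space by simp
    finally show ?thesis .
  qed
  finally show ?thesis unfolding c_def by (simp add: power2_eq_square)
qed

lemma h_sq_le_K: "norm a = 1 \<Longrightarrow> (Mf a a)\<^sup>2 \<le> K a"
proof -
  assume a: "norm a = 1"
  have "(Mf a a)\<^sup>2 = (\<Sum>j\<in>Basis. (a \<bullet> j) * Mf a j)\<^sup>2" by (subst Mf_lin2) simp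
  also have "\<dots> \<le> (\<Sum>j\<in>Basis. (a \<bullet> j)\<^sup>2) * (\<Sum>j\<in>Basis. (Mf a j)\<^sup>2)" by (rule Cauchy_Schwarz_ineq_sum)
  also have "(\<Sum>j\<in>Basis. (a \<bullet> j)\<^sup>2) = 1"
    using a by (simp add: euclidean_inner[symmetric] power2_eq_square power2_norm_eq_inner[symmetric])
  finally show ?thesis unfolding K_def by simp
qed


end

lemma ONB:
  "\<exists>\<nu>::'a::euclidean_space measure. sphere_borel_prob \<nu> \<and>
     frame_energy3 \<nu> = ennreal (1 / (real DIM('a))\<^sup>2)"
proof -
  let ?p = "pmf_of_set (Basis::'a set)"
  let ?d = "real DIM('a)"
  define \<nu> where "\<nu> = distr (measure_pmf ?p) borel id"
  have ne: "(Basis::'a set) \<noteq> {}" "finite (Basis::'a set)" by auto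
  have meas: "id \<in> measurable (measure_pmf ?p) borel" by simp
  have ps: "prob_space \<nu>" unfolding \<nu>_def
    by (rule prob_space.prob_space_distr[OF measure_pmf.prob_space_axioms meas])
  have sets: "sets \<nu> = sets borel" unfolding \<nu>_def by simp
  have "emeasure \<nu> (sphere 0 1) = emeasure (measure_pmf ?p) (sphere 0 1)"
    unfolding \<nu>_def by (subst emeasure_distr) auto
  also have "\<dots> = 1"
  proof -
    have "set_pmf ?p \<subseteq> sphere 0 1" using ne by (auto simp: set_pmf_of_set)
    thus ?thesis by (simp add: measure_pmf.emeasure_eq_1_AE AE_measure_pmf_iff subset_iff)
  qed
  finally have sph: "emeasure \<nu> (sphere 0 1) = 1" .
  have SBn: "sphere_borel_prob \<nu>" using ps sets sph unfolding sphere_borel_prob_def by blast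
  interpret N: SB \<nu> by unfold_locales (rule SBn)
  have integ: "\<And>g. continuous_on UNIV g \<Longrightarrow> integral\<^sup>L \<nu> g = (\<Sum>x\<in>Basis. g x) / ?d"
  proof -
    fix g :: "'a \<Rightarrow> real" assume "continuous_on UNIV g"
    hence "g \<in> borel_measurable borel" by (rule borel_measurable_continuous_onI)
    thus "integral\<^sup>L \<nu> g = (\<Sum>x\<in>Basis. g x) / ?d"
      unfolding \<nu>_def by (subst integral_distr) (auto simp: integral_pmf_of_set[OF ne])
  qed
  have "frame_energy3 \<nu> = ennreal (\<integral>a. \<integral>b. \<integral>c. \<bar>N.T a b c\<bar> \<partial>\<nu> \<partial>\<nu> \<partial>\<nu>)"
    unfolding frame_energy3_def N.T_def[symmetric]
    by (rule N.T_nn) (unfold N.T_def, intro continuous_intros, simp)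
  also have "(\<integral>a. \<integral>b. \<integral>c. \<bar>N.T a b c\<bar> \<partial>\<nu> \<partial>\<nu> \<partial>\<nu>) = 1 / ?d\<^sup>2"
  proof -
    have 1: "\<And>a b. (\<integral>c. \<bar>N.T a b c\<bar> \<partial>\<nu>) = (\<Sum>c\<in>Basis. \<bar>N.T a b c\<bar>) / ?d"
      by (rule integ) (unfold N.T_def, intro continuous_intros)
    have 2: "\<And>a. (\<integral>b. (\<Sum>c\<in>Basis. \<bar>N.T a b c\<bar>) / ?d \<partial>\<nu>) = (\<Sum>b\<in>Basis. (\<Sum>c\<in>Basis. \<bar>N.T a b c\<bar>) / ?d) / ?d"
      by (rule integ) (unfold N.T_def, intro continuous_intros, auto)
    have 3: "(\<integral>a. (\<Sum>b\<in>Basis. (\<Sum>c\<in>Basis. \<bar>N.T a b c\<bar>) / ?d) / ?d \<partial>\<nu>) =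
       (\<Sum>a\<in>Basis. (\<Sum>b\<in>Basis. (\<Sum>c\<in>Basis. \<bar>N.T a b c\<bar>) / ?d) / ?d) / ?d"
      by (rule integ) (unfold N.T_def, intro continuous_intros, auto)
    have 4: "\<And>a b. a \<in> Basis \<Longrightarrow> b \<in> Basis \<Longrightarrow> (\<Sum>c\<in>(Basis::'a set). \<bar>N.T a b c\<bar>) = (if a = b then 1 else 0)"
      unfolding N.T_def by (auto simp: inner_Basis if_distrib cong: if_cong)
    have 5: "\<And>a. a \<in> Basis \<Longrightarrow> (\<Sum>b\<in>(Basis::'a set). (\<Sum>c\<in>Basis. \<bar>N.T a b c\<bar>) / ?d) = 1 / ?d"
    proof -
      fix a :: 'a assume a: "a \<in> Basis"
      have "(\<Sum>b\<in>(Basis::'a set). (\<Sum>c\<in>Basis. \<bar>N.T a b c\<bar>) / ?d) = (\<Sum>b\<in>(Basis::'a set). (if a = b then 1 / ?d else 0))"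
        by (rule sum.cong) (use a 4 in auto)
      also have "\<dots> = 1 / ?d" using a by simp
      finally show "(\<Sum>b\<in>(Basis::'a set). (\<Sum>c\<in>Basis. \<bar>N.T a b c\<bar>) / ?d) = 1 / ?d" .
    qed
    have "(\<integral>a. \<integral>b. \<integral>c. \<bar>N.T a b c\<bar> \<partial>\<nu> \<partial>\<nu> \<partial>\<nu>) =
       (\<Sum>a\<in>Basis. (\<Sum>b\<in>Basis. (\<Sum>c\<in>Basis. \<bar>N.T a b c\<bar>) / ?d) / ?d) / ?d"
      by (simp only: 1 2 3)
    also have "\<dots> = (\<Sum>a\<in>(Basis::'a set). 1 / ?d / ?d) / ?d"
      by (simp only: 5 cong: sum.cong)
    finally show ?thesis by (simp add: power2_eq_square)
  qed
  finally show ?thesis using SBn by blast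
qed


lemma mat_id:
  fixes A :: "'b \<Rightarrow> 'b \<Rightarrow> real"
  assumes S: "finite S" "S \<noteq> {}" and tr: "(\<Sum>i\<in>S. A i i) = 1"
  shows "(\<Sum>i\<in>S. \<Sum>j\<in>S. (A i j)\<^sup>2) = 1 / card S + (\<Sum>i\<in>S. (A i i - 1 / card S)\<^sup>2) + (\<Sum>i\<in>S. \<Sum>j\<in>S-{i}. (A i j)\<^sup>2)"
proof -
  have n: "real (card S) > 0" using S by (simp add: card_gt_0_iff)
  have 1: "(\<Sum>i\<in>S. \<Sum>j\<in>S. (A i j)\<^sup>2) = (\<Sum>i\<in>S. (A i i)\<^sup>2) + (\<Sum>i\<in>S. \<Sum>j\<in>S-{i}. (A i j)\<^sup>2)"
    by (subst sum.distrib[symmetric]) (rule sum.cong[OF refl], rule sum.remove, use S in auto)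
  have 2: "(\<Sum>i\<in>S. (A i i - 1 / card S)\<^sup>2) = (\<Sum>i\<in>S. (A i i)\<^sup>2) - 2 / card S * (\<Sum>i\<in>S. A i i) + card S * (1 / card S)\<^sup>2"
    by (simp add: power2_diff sum.distrib sum_subtractf sum_distrib_left sum_divide_distrib algebra_simps)
  have 3: "card S * (1 / real (card S))\<^sup>2 = 1 / card S" using n by (simp add: power2_eq_square)
  show ?thesis using 1 2 3 tr by simp
qed

lemma AE2_mono:
  assumes "AE a in N. AE b in N. P a b" "\<And>a b. P a b \<Longrightarrow> Q a b"
  shows "AE a in N. AE b in N. Q a b"
  using assms(1)
proof eventually_elim
  fix a assume "AE b in N. P a b"
  thus "AE b in N. Q a b" by eventually_elim (rule assms(2))
qed

lemma AE3_mono: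
  assumes "AE a in N. AE b in N. AE c in N. P a b c" "\<And>a b c. P a b c \<Longrightarrow> Q a b c"
  shows "AE a in N. AE b in N. AE c in N. Q a b c"
  using assms(1)
proof eventually_elim
  fix a assume "AE b in N. AE c in N. P a b c"
  thus "AE b in N. AE c in N. Q a b c" by (rule AE2_mono) (rule assms(2))
qed

context SB begin

lemma chain:
  assumes E: "frame_energy3 M \<le> ennreal (1 / (real DIM('a))\<^sup>2)"
  shows "AE a in M. AE b in M. AE c in M. T a b c \<ge> 0"
    and "\<And>i j. i \<in> Basis \<Longrightarrow> j \<in> Basis \<Longrightarrow> Mf i j = (if i = j then 1 / real DIM('a) else 0)"
proof -
  let ?d = "real DIM('a)"
  have d: "?d > 0" by simp
  define D where "D a b c = \<bar>T a b c\<bar> - T a b c" for a b c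
  have Dc: "continuous_on UNIV (\<lambda>p. D (fst (fst p)) (snd (fst p)) (snd p))"
    unfolding D_def T_def by (intro continuous_intros)
  have Ac: "continuous_on UNIV (\<lambda>p. \<bar>T (fst (fst p)) (snd (fst p)) (snd p)\<bar>)"
    unfolding T_def by (intro continuous_intros)
  define J where "J = (\<integral>a. \<integral>b. \<integral>c. \<bar>T a b c\<bar> \<partial>M \<partial>M \<partial>M)"
  define D3 where "D3 = (\<integral>a. \<integral>b. \<integral>c. D a b c \<partial>M \<partial>M \<partial>M)"
  have EJ: "frame_energy3 M = ennreal J"
    unfolding frame_energy3_def J_def T_def[symmetric] by (rule T_nn[OF Ac]) simp
  have J0: "J \<ge> 0" unfolding J_def by (simp add: Bochner_Integration.integral_nonneg)
  have Jle: "J \<le> 1 / ?d\<^sup>2" using E EJ J0 by (simp add: ennreal_le_iff)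
  have "J = (\<integral>a. \<integral>b. \<integral>c. D a b c + T a b c \<partial>M \<partial>M \<partial>M)" unfolding J_def D_def by simp
  also have "\<dots> = D3 + (\<integral>a. K a \<partial>M)" unfolding D3_def
    by (subst T_add[OF Dc T_cont]) (simp add: I3T)
  finally have JD: "J = D3 + (\<integral>a. K a \<partial>M)" .
  have D30: "D3 \<ge> 0" unfolding D3_def D_def by (simp add: Bochner_Integration.integral_nonneg)
  have hint: "integrable M (\<lambda>a. Mf a a)" by (rule int_cont[OF h_cont])
  have h2int: "integrable M (\<lambda>a. (Mf a a)\<^sup>2)" by (rule int_cont) (intro continuous_intros h_cont)
  have Kint: "integrable M K" by (rule int_cont[OF K_cont])
  have "(\<integral>a. Mf a a \<partial>M)\<^sup>2 \<le> (\<integral>a. (Mf a a)\<^sup>2 \<partial>M)" by (rule jensen_sq[OF hint h2int])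
  also have "\<dots> \<le> (\<integral>a. K a \<partial>M)"
    by (rule integral_mono_AE[OF h2int Kint]) (use AE_sph in eventually_elim, use h_sq_le_K in auto)
  finally have hK: "(\<integral>a. Mf a a \<partial>M)\<^sup>2 \<le> (\<integral>a. K a \<partial>M)" .
  define X where "X = (\<Sum>i\<in>Basis. (Mf i i - 1 / ?d)\<^sup>2)"
  define Y where "Y = (\<Sum>i\<in>Basis. \<Sum>j\<in>Basis-{i}. (Mf i j)\<^sup>2)"
  have hXY: "(\<integral>a. Mf a a \<partial>M) = 1 / ?d + X + Y"
    unfolding int_h X_def Y_def by (rule mat_id[where S="Basis::'a set" and A=Mf]) (auto simp: Mf_trace)
  have X0: "X \<ge> 0" unfolding X_def by (simp add: sum_nonneg)
  have Y0: "Y \<ge> 0" unfolding Y_def by (simp add: sum_nonneg)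
  have sq: "(1 / ?d + X + Y)\<^sup>2 \<ge> (1 / ?d)\<^sup>2 + 2 * (1 / ?d) * (X + Y)"
  proof -
    have "(1 / ?d + X + Y)\<^sup>2 = (1 / ?d)\<^sup>2 + 2 * (1 / ?d) * (X + Y) + (X + Y)\<^sup>2"
      by (simp add: power2_sum add.assoc)
    thus ?thesis by simp
  qed
  have inv: "1 / ?d > 0" using d by simp
  have pd: "(1 / ?d)\<^sup>2 = 1 / ?d\<^sup>2" by (simp add: power_divide)
  have all: "D3 + 2 * (1 / ?d) * (X + Y) \<le> 0"
    using Jle JD hK[unfolded hXY] sq pd by linarith
  have m0: "2 * (1 / ?d) * (X + Y) \<ge> 0" using X0 Y0 inv by simp
  have "D3 = 0" using all m0 D30 by linarith
  have "2 * (1 / ?d) * (X + Y) = 0" using all m0 D30 by linarith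
  hence "X + Y = 0" using inv by simp
  hence X: "X = 0" and Y: "Y = 0" using X0 Y0 by auto
  show "AE a in M. AE b in M. AE c in M. T a b c \<ge> 0"
  proof -
    have "AE a in M. AE b in M. AE c in M. D a b c = 0"
      by (rule T_zero[OF Dc]) (use \<open>D3 = 0\<close> D3_def D_def in auto)
    thus ?thesis by (rule AE3_mono) (simp add: D_def)
  qed
  fix i j :: 'a assume ij: "i \<in> Basis" "j \<in> Basis"
  have Xi: "\<forall>i\<in>Basis. (Mf i i - 1 / ?d)\<^sup>2 = 0"
    using X unfolding X_def by (subst sum_nonneg_eq_0_iff[symmetric]) auto
  have Yi: "\<forall>i\<in>Basis. \<forall>j\<in>Basis-{i}. (Mf i j)\<^sup>2 = 0"
  proof -
    have "\<forall>i\<in>Basis. (\<Sum>j\<in>Basis-{i}. (Mf i j)\<^sup>2) = 0"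
      using Y unfolding Y_def by (subst sum_nonneg_eq_0_iff[symmetric]) (auto intro: sum_nonneg)
    thus ?thesis by (subst (asm) sum_nonneg_eq_0_iff) auto
  qed
  show "Mf i j = (if i = j then 1 / ?d else 0)"
    using Xi Yi ij by auto
qed

end



lemma sign_aux: fixes p q :: real shows "\<bar>p - q\<bar> < \<bar>q\<bar> \<Longrightarrow> p * q > 0"
proof (cases "q > 0")
  case True
  assume "\<bar>p - q\<bar> < \<bar>q\<bar>" hence "p > 0" using True by linarith
  thus ?thesis using True by simp
next
  case False
  assume h: "\<bar>p - q\<bar> < \<bar>q\<bar>" hence "q < 0" using False by linarith
  moreover have "p < 0" using h \<open>q < 0\<close> by linarith
  ultimately show ?thesis by (simp add: mult_neg_neg)
qed

lemma sign2: fixes p q p' q' t :: real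
  assumes "p * q > 0" "p' * q' > 0" "p * p' * t \<ge> 0" shows "q * q' * t \<ge> 0"
proof -
  have e: "(q * q' * t) * ((p * q) * (p' * q')) = (p * p' * t) * (q * q')\<^sup>2"
    by (simp add: power2_eq_square algebra_simps)
  have "(q * q' * t) * ((p * q) * (p' * q')) \<ge> 0" unfolding e using assms(3) by simp
  moreover have "(p * q) * (p' * q') > 0" using assms(1,2) by simp
  ultimately show ?thesis by (simp add: zero_le_mult_iff)
qed

lemma sgn_aux: fixes q q' t :: real
  assumes "q \<noteq> 0" "q' \<noteq> 0" "q * q' * t \<ge> 0" shows "sgn q * sgn q' * t \<ge> 0"
  using assms by (cases "q > 0"; cases "q' > 0") (auto simp: zero_le_mult_iff mult_le_0_iff)

context SB begin

lemma meas_idM[measurable]: "(\<lambda>x. x) \<in> borel_measurable M"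
  by (rule meas_cont) (intro continuous_intros)

lemma final:
  assumes E: "frame_energy3 M \<le> ennreal (1 / (real DIM('a))\<^sup>2)"
    and x0: "x0 \<in> msupport M" and nz: "\<forall>y\<in>msupport M. x0 \<bullet> y \<noteq> 0"
    and d2: "DIM('a) \<ge> 2"
  shows False
proof -
  let ?d = "real DIM('a)"
  have d: "?d > 0" by simp
  note Mfij = chain(2)[OF E]
  have iso: "Mf u u = (norm u)\<^sup>2 / ?d" for u
  proof -
    have "Mf u u = (\<Sum>i\<in>Basis. \<Sum>j\<in>Basis. (u \<bullet> i) * (u \<bullet> j) * (if i = j then 1 / ?d else 0))"
      by (subst Mf_bil) (intro sum.cong refl, simp add: Mfij)
    also have "\<dots> = (\<Sum>i\<in>Basis. (u \<bullet> i) * (u \<bullet> i) / ?d)"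
      by (intro sum.cong refl) (simp add: if_distrib cong: if_cong)
    also have "\<dots> = (u \<bullet> u) / ?d" by (simp add: euclidean_inner[of u u] sum_divide_distrib)
    finally show ?thesis by (simp add: power2_norm_eq_inner)
  qed
  have nx0: "norm x0 = 1" by (rule supp_sphere[OF x0])
  define good where "good y \<longleftrightarrow> norm y = 1 \<and> x0 \<bullet> y \<noteq> 0" for y
  have AEgood: "AE y in M. good y"
    using AE_sph AE_supp by eventually_elim (use nz in \<open>auto simp: good_def\<close>)
  have Trot: "AE b in M. AE c in M. AE a in M. T a b c \<ge> 0"
    by (rule AE3_mono[OF chain(1)[OF E]]) (simp add: T_def inner_commute mult.commute mult.left_commute)
  define R where "R b c = (x0 \<bullet> b) * (x0 \<bullet> c) * (b \<bullet> c)" for b c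
  have Hp: "AE b in M. AE c in M. R b c \<ge> 0"
    using Trot AEgood
  proof eventually_elim
    fix b assume b: "AE c in M. AE a in M. T a b c \<ge> 0" "good b"
    show "AE c in M. R b c \<ge> 0"
      using b(1) AEgood
    proof eventually_elim
      fix c assume c: "AE a in M. T a b c \<ge> 0" "good c"
      define e where "e = min \<bar>x0 \<bullet> b\<bar> \<bar>x0 \<bullet> c\<bar>"
      have e: "e > 0" using b(2) c(2) unfolding e_def good_def by simp
      obtain a where a: "dist x0 a < e" "T a b c \<ge> 0" using ball_trick[OF x0 e c(1)] by blast
      have ab: "\<bar>a \<bullet> b - x0 \<bullet> b\<bar> < \<bar>x0 \<bullet> b\<bar>"
      proof -
        have "\<bar>a \<bullet> b - x0 \<bullet> b\<bar> = \<bar>(a - x0) \<bullet> b\<bar>" by (simp add: inner_diff_left)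
        also have "\<dots> \<le> norm (a - x0) * norm b" by (rule Cauchy_Schwarz_ineq2)
        also have "\<dots> = dist x0 a" using b(2) by (simp add: good_def dist_norm norm_minus_commute)
        finally show ?thesis using a(1) unfolding e_def by linarith
      qed
      have ac: "\<bar>a \<bullet> c - x0 \<bullet> c\<bar> < \<bar>x0 \<bullet> c\<bar>"
      proof -
        have "\<bar>a \<bullet> c - x0 \<bullet> c\<bar> = \<bar>(a - x0) \<bullet> c\<bar>" by (simp add: inner_diff_left)
        also have "\<dots> \<le> norm (a - x0) * norm c" by (rule Cauchy_Schwarz_ineq2)
        also have "\<dots> = dist x0 a" using c(2) by (simp add: good_def dist_norm norm_minus_commute)
        finally show ?thesis using a(1) unfolding e_def by linarith
      qed
      show "R b c \<ge> 0" unfolding R_def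
        by (rule sign2[OF sign_aux[OF ab] sign_aux[OF ac]]) (use a(2) in \<open>simp add: T_def\<close>)
    qed
  qed
  define s where "s y = sgn (x0 \<bullet> y)" for y
  define P where "P b c = s b * s c * (b \<bullet> c)" for b c
  have s_good: "good y \<Longrightarrow> (s y)\<^sup>2 = 1" for y
    unfolding s_def good_def by (auto simp: sgn_real_def)
  have s_abs: "\<bar>s y\<bar> \<le> 1" for y unfolding s_def by (simp add: sgn_real_def)
  have Pprop: "AE b in M. good b \<and> (AE c in M. good c \<and> 0 \<le> P b c \<and> P b c \<le> 1 \<and> (P b c)\<^sup>2 = (b \<bullet> c)\<^sup>2)"
    using Hp AEgood
  proof eventually_elim
    fix b assume b: "AE c in M. R b c \<ge> 0" "good b"
    have "AE c in M. good c \<and> 0 \<le> P b c \<and> P b c \<le> 1 \<and> (P b c)\<^sup>2 = (b \<bullet> c)\<^sup>2"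
      using b(1) AEgood
    proof eventually_elim
      fix c assume c: "R b c \<ge> 0" "good c"
      have "0 \<le> P b c" unfolding P_def s_def
        by (rule sgn_aux) (use b(2) c in \<open>auto simp: good_def R_def\<close>)
      moreover have "\<bar>b \<bullet> c\<bar> \<le> 1"
        using Cauchy_Schwarz_ineq2[of b c] b(2) c(2) by (simp add: good_def)
      hence "\<bar>P b c\<bar> \<le> 1" unfolding P_def abs_mult using s_abs[of b] s_abs[of c]
        by (intro mult_le_one) auto
      hence "P b c \<le> 1" by simp
      moreover have "(P b c)\<^sup>2 = (b \<bullet> c)\<^sup>2"
        unfolding P_def using s_good[OF b(2)] s_good[OF c(2)] by (simp add: power_mult_distrib)
      ultimately show "good c \<and> 0 \<le> P b c \<and> P b c \<le> 1 \<and> (P b c)\<^sup>2 = (b \<bullet> c)\<^sup>2" using c by simp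
    qed
    thus "good b \<and> (AE c in M. good c \<and> 0 \<le> P b c \<and> P b c \<le> 1 \<and> (P b c)\<^sup>2 = (b \<bullet> c)\<^sup>2)" using b by simp
  qed
  define Sf where "Sf v = (\<integral>y. s y * (y \<bullet> v) \<partial>M)" for v
  have s_meas[measurable]: "s \<in> borel_measurable M" unfolding s_def by measurable
  have Sint: "integrable M (\<lambda>y. s y * (y \<bullet> v))" for v
  proof (rule int_bdd[where B="norm v"])
    show "(\<lambda>y. s y * (y \<bullet> v)) \<in> borel_measurable M" by measurable
    fix y :: 'a assume "norm y = 1"
    hence "\<bar>y \<bullet> v\<bar> \<le> norm v" using Cauchy_Schwarz_ineq2[of y v] by simp
    thus "\<bar>s y * (y \<bullet> v)\<bar> \<le> norm v" using s_abs[of y] unfolding abs_mult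
      using mult_right_mono[OF s_abs[of y] abs_ge_zero[of "y \<bullet> v"]] by linarith
  qed
  have Sf_lin: "Sf v = (\<Sum>j\<in>Basis. (v \<bullet> j) * Sf j)" for v
  proof -
    have "Sf v = (\<integral>y. (\<Sum>j\<in>Basis. (v \<bullet> j) * (s y * (y \<bullet> j))) \<partial>M)"
      unfolding Sf_def by (rule Bochner_Integration.integral_cong[OF refl])
        (subst inner_exp[of _ v], simp add: sum_distrib_left algebra_simps)
    also have "\<dots> = (\<Sum>j\<in>Basis. (v \<bullet> j) * Sf j)"
      unfolding Sf_def by (simp add: Sint)
    finally show ?thesis .
  qed
  define m where "m = (\<Sum>j\<in>Basis. Sf j *\<^sub>R j)"
  have Sf_m: "Sf v = v \<bullet> m" for v
    unfolding m_def by (subst Sf_lin) (simp add: inner_sum_right mult.commute)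
  have mm_le: "(m \<bullet> m)\<^sup>2 \<le> (m \<bullet> m) / ?d"
  proof -
    have sq_int: "integrable M (\<lambda>y. (s y * (y \<bullet> m))\<^sup>2)"
    proof (rule int_bdd[where B="(norm m)\<^sup>2"])
      show "(\<lambda>y. (s y * (y \<bullet> m))\<^sup>2) \<in> borel_measurable M" by measurable
      fix y :: 'a assume "norm y = 1"
      hence "\<bar>y \<bullet> m\<bar> \<le> norm m" using Cauchy_Schwarz_ineq2[of y m] by simp
      hence "\<bar>s y * (y \<bullet> m)\<bar> \<le> norm m" using s_abs[of y] unfolding abs_mult
        using mult_right_mono[OF s_abs[of y] abs_ge_zero[of "y \<bullet> m"]] by linarith
      from power_mono[OF this abs_ge_zero, of 2]
      show "\<bar>(s y * (y \<bullet> m))\<^sup>2\<bar> \<le> (norm m)\<^sup>2" by simp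
    qed
    have "(m \<bullet> m)\<^sup>2 = (Sf m)\<^sup>2" by (simp add: Sf_m)
    also have "\<dots> \<le> (\<integral>y. (s y * (y \<bullet> m))\<^sup>2 \<partial>M)" unfolding Sf_def by (rule jensen_sq[OF Sint sq_int])
    also have "\<dots> \<le> (\<integral>y. (y \<bullet> m) * (y \<bullet> m) \<partial>M)"
    proof (rule integral_mono[OF sq_int Mf_int])
      fix y :: 'a
      have "(s y)\<^sup>2 \<le> 1" using power_mono[OF s_abs[of y] abs_ge_zero, of 2] by simp
      hence "(s y)\<^sup>2 * (y \<bullet> m)\<^sup>2 \<le> 1 * (y \<bullet> m)\<^sup>2" by (intro mult_right_mono) auto
      thus "(s y * (y \<bullet> m))\<^sup>2 \<le> (y \<bullet> m) * (y \<bullet> m)" by (simp add: power_mult_distrib power2_eq_square mult_ac)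
    qed
    also have "\<dots> = (m \<bullet> m) / ?d" using iso[of m] unfolding Mf_def by (simp add: power2_norm_eq_inner)
    finally show ?thesis .
  qed
  have P_meas[measurable]: "(\<lambda>(b, c). P b c - (P b c)\<^sup>2) \<in> borel_measurable (M \<Otimes>\<^sub>M M)"
    unfolding P_def s_def by measurable
  have Pint: "integrable M (\<lambda>c. P b c - (P b c)\<^sup>2)" for b
  proof (rule int_bdd[where B="norm b + (norm b)\<^sup>2"])
    show "(\<lambda>c. P b c - (P b c)\<^sup>2) \<in> borel_measurable M" unfolding P_def s_def by measurable
    fix c :: 'a assume c: "norm c = 1"
    have "\<bar>b \<bullet> c\<bar> \<le> norm b" using Cauchy_Schwarz_ineq2[of b c] c by simp
    moreover have "\<bar>s b * s c\<bar> \<le> 1" unfolding abs_mult using s_abs[of b] s_abs[of c]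
      by (intro mult_le_one) auto
    ultimately have "\<bar>P b c\<bar> \<le> norm b" unfolding P_def abs_mult[of "s b * s c"]
      using mult_right_mono[of "\<bar>s b * s c\<bar>" 1 "\<bar>b \<bullet> c\<bar>"] by simp
    moreover from power_mono[OF this abs_ge_zero, of 2] have "(P b c)\<^sup>2 \<le> (norm b)\<^sup>2" by simp
    moreover have "\<bar>P b c - (P b c)\<^sup>2\<bar> \<le> \<bar>P b c\<bar> + \<bar>(P b c)\<^sup>2\<bar>" by (rule abs_triangle_ineq4)
    ultimately show "\<bar>P b c - (P b c)\<^sup>2\<bar> \<le> norm b + (norm b)\<^sup>2" by simp
  qed
  define F where "F b = (\<integral>c. P b c - (P b c)\<^sup>2 \<partial>M)" for b
  have F_meas: "F \<in> borel_measurable M" unfolding F_def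
    by (rule borel_measurable_lebesgue_integral) (use P_meas in \<open>simp add: case_prod_unfold\<close>)
  define G where "G b = s b * (b \<bullet> m) - Mf b b" for b
  have Gint: "integrable M G" unfolding G_def
    by (intro Bochner_Integration.integrable_diff Sint int_cont[OF h_cont])
  have FG: "AE b in M. F b = G b"
    using Pprop
  proof eventually_elim
    fix b assume b: "good b \<and> (AE c in M. good c \<and> 0 \<le> P b c \<and> P b c \<le> 1 \<and> (P b c)\<^sup>2 = (b \<bullet> c)\<^sup>2)"
    have "F b = (\<integral>c. s b * (s c * (c \<bullet> b)) - (c \<bullet> b) * (c \<bullet> b) \<partial>M)"
      unfolding F_def
    proof (rule integral_cong_AE)
      show "AE c in M. P b c - (P b c)\<^sup>2 = s b * (s c * (c \<bullet> b)) - (c \<bullet> b) * (c \<bullet> b)"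
        using conjunct2[OF b] by eventually_elim (simp add: P_def inner_commute power2_eq_square mult_ac)
    qed (unfold P_def s_def; measurable)+
    also have "\<dots> = s b * Sf b - Mf b b" unfolding Sf_def Mf_def
      by (simp add: Sint Mf_int)
    finally show "F b = G b" unfolding G_def Sf_m .
  qed
  have Fint: "integrable M F" by (rule integrable_cong_AE_imp[OF Gint F_meas]) (use FG in auto)
  have inth: "(\<integral>a. Mf a a \<partial>M) = 1 / ?d"
  proof -
    have "(\<integral>a. Mf a a \<partial>M) = (\<Sum>i\<in>(Basis::'a set). \<Sum>j\<in>Basis. (if i = j then 1 / ?d else 0)\<^sup>2)"
      unfolding int_h by (intro sum.cong refl) (simp add: Mfij)
    also have "\<dots> = (\<Sum>i\<in>(Basis::'a set). \<Sum>j\<in>Basis. (if i = j then (1 / ?d)\<^sup>2 else 0))"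
      by (intro sum.cong refl) auto
    also have "\<dots> = (\<Sum>i\<in>(Basis::'a set). (1 / ?d)\<^sup>2)"
      by (intro sum.cong refl) simp
    also have "\<dots> = 1 / ?d" by (simp add: power2_eq_square)
    finally show ?thesis .
  qed
  have intF: "(\<integral>b. F b \<partial>M) = m \<bullet> m - 1 / ?d"
  proof -
    have "(\<integral>b. F b \<partial>M) = (\<integral>b. G b \<partial>M)" by (rule integral_cong_AE[OF F_meas _ FG]) (use Gint in auto)
    also have "\<dots> = Sf m - (\<integral>a. Mf a a \<partial>M)" unfolding G_def Sf_def
      by (simp add: Sint int_cont[OF h_cont] inner_commute)
    finally show ?thesis by (simp add: inth Sf_m)
  qed
  have Fnn: "AE b in M. F b \<ge> 0"
    using Pprop
  proof eventually_elim
    fix b assume b: "good b \<and> (AE c in M. good c \<and> 0 \<le> P b c \<and> P b c \<le> 1 \<and> (P b c)\<^sup>2 = (b \<bullet> c)\<^sup>2)"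
    show "F b \<ge> 0" unfolding F_def
    proof (rule integral_nonneg_AE)
      show "AE c in M. 0 \<le> P b c - (P b c)\<^sup>2" using conjunct2[OF b]
      proof eventually_elim
        fix c assume "good c \<and> 0 \<le> P b c \<and> P b c \<le> 1 \<and> (P b c)\<^sup>2 = (b \<bullet> c)\<^sup>2"
        hence "0 \<le> P b c * (1 - P b c)" by simp
        thus "0 \<le> P b c - (P b c)\<^sup>2" by (simp add: power2_eq_square algebra_simps)
      qed
    qed
  qed
  have F0: "(\<integral>b. F b \<partial>M) = 0"
  proof -
    have "(\<integral>b. F b \<partial>M) \<ge> 0" by (rule integral_nonneg_AE[OF Fnn])
    hence ge: "m \<bullet> m \<ge> 1 / ?d" using intF by simp
    hence pos: "m \<bullet> m > 0" using d by (smt (verit) divide_pos_pos)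
    have "(m \<bullet> m) * (m \<bullet> m) \<le> (m \<bullet> m) * (1 / ?d)" using mm_le by (simp add: power2_eq_square)
    hence "m \<bullet> m \<le> 1 / ?d" using mult_left_le_imp_le[of "m \<bullet> m" "m \<bullet> m" "1 / ?d"] pos by blast
    thus ?thesis using ge intF by simp
  qed
  have Z: "AE b in M. AE c in M. (b \<bullet> c)\<^sup>2 = 0 \<or> (b \<bullet> c)\<^sup>2 = 1"
  proof -
    have "AE b in M. F b = 0" using F0 integral_nonneg_eq_0_iff_AE[OF Fint Fnn] by simp
    thus ?thesis using Pprop
    proof eventually_elim
      fix b assume b: "F b = 0" "good b \<and> (AE c in M. good c \<and> 0 \<le> P b c \<and> P b c \<le> 1 \<and> (P b c)\<^sup>2 = (b \<bullet> c)\<^sup>2)"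
      have "AE c in M. P b c - (P b c)\<^sup>2 = 0"
      proof (subst integral_nonneg_eq_0_iff_AE[OF Pint, symmetric])
        show "AE c in M. 0 \<le> P b c - (P b c)\<^sup>2" using conjunct2[OF b(2)]
        proof eventually_elim
          fix c assume "good c \<and> 0 \<le> P b c \<and> P b c \<le> 1 \<and> (P b c)\<^sup>2 = (b \<bullet> c)\<^sup>2"
          hence "0 \<le> P b c * (1 - P b c)" by simp
          thus "0 \<le> P b c - (P b c)\<^sup>2" by (simp add: power2_eq_square algebra_simps)
        qed
        show "(\<integral>c. P b c - (P b c)\<^sup>2 \<partial>M) = 0" using b(1) unfolding F_def .
      qed
      thus "AE c in M. (b \<bullet> c)\<^sup>2 = 0 \<or> (b \<bullet> c)\<^sup>2 = 1" using conjunct2[OF b(2)]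
      proof eventually_elim
        fix c assume c: "P b c - (P b c)\<^sup>2 = 0" "good c \<and> 0 \<le> P b c \<and> P b c \<le> 1 \<and> (P b c)\<^sup>2 = (b \<bullet> c)\<^sup>2"
        have "P b c * (1 - P b c) = 0" using c(1) by (simp add: power2_eq_square algebra_simps)
        hence "P b c = 0 \<or> P b c = 1" by simp
        thus "(b \<bullet> c)\<^sup>2 = 0 \<or> (b \<bullet> c)\<^sup>2 = 1" using c(2) by auto
      qed
    qed
  qed
  have Z': "AE c in M. AE b in M. \<bar>b \<bullet> c\<bar> = 0 \<or> \<bar>b \<bullet> c\<bar> = 1"
  proof (rule AE2_mono[OF Z])
    fix u v :: 'a assume "(u \<bullet> v)\<^sup>2 = 0 \<or> (u \<bullet> v)\<^sup>2 = 1"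
    thus "\<bar>v \<bullet> u\<bar> = 0 \<or> \<bar>v \<bullet> u\<bar> = 1"
      by (auto simp: inner_commute abs_square_eq_1)
  qed
  have one: "AE c in M. (c \<bullet> x0) * (c \<bullet> x0) = 1"
    using Z' AEgood
  proof eventually_elim
    fix c assume c: "AE b in M. \<bar>b \<bullet> c\<bar> = 0 \<or> \<bar>b \<bullet> c\<bar> = 1" "good c"
    define t where "t = \<bar>x0 \<bullet> c\<bar>"
    have t0: "t > 0" using c(2) unfolding t_def good_def by simp
    have "t = 1"
    proof (rule ccontr)
      assume t1: "t \<noteq> 1"
      define e where "e = min t \<bar>1 - t\<bar>"
      have e: "e > 0" using t0 t1 unfolding e_def by simp
      obtain b where b: "dist x0 b < e" "\<bar>b \<bullet> c\<bar> = 0 \<or> \<bar>b \<bullet> c\<bar> = 1"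
        using ball_trick[OF x0 e c(1)] by blast
      have "\<bar>\<bar>b \<bullet> c\<bar> - t\<bar> \<le> \<bar>b \<bullet> c - x0 \<bullet> c\<bar>" unfolding t_def by (rule abs_triangle_ineq3)
      also have "\<bar>b \<bullet> c - x0 \<bullet> c\<bar> = \<bar>(b - x0) \<bullet> c\<bar>" by (simp add: inner_diff_left)
      also have "\<dots> \<le> norm (b - x0) * norm c" by (rule Cauchy_Schwarz_ineq2)
      also have "\<dots> = dist x0 b" using c(2) by (simp add: good_def dist_norm norm_minus_commute)
      finally have "\<bar>\<bar>b \<bullet> c\<bar> - t\<bar> < e" using b(1) by linarith
      thus False using b(2) t0 unfolding e_def by auto
    qed
    hence "(x0 \<bullet> c)\<^sup>2 = 1" unfolding t_def by (simp add: abs_square_eq_1)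
    thus "(c \<bullet> x0) * (c \<bullet> x0) = 1" by (simp add: inner_commute power2_eq_square)
  qed
  have "Mf x0 x0 = 1"
  proof -
    have "Mf x0 x0 = (\<integral>c. 1 \<partial>M)" unfolding Mf_def
      by (rule integral_cong_AE[OF _ _ one]) (auto intro!: meas_cont continuous_intros)
    thus ?thesis using prob_space by simp
  qed
  moreover have "Mf x0 x0 = 1 / ?d" using iso[of x0] nx0 by simp
  moreover have "1 / ?d < 1" using d2 by simp
  ultimately show False by simp
qed
end

theorem lemma6p1:
  fixes \<mu> :: "'a::euclidean_space measure"
  assumes "DIM('a) \<ge> 2"
    and "sphere_borel_prob \<mu>"
    and "\<And>\<nu> :: 'a measure. sphere_borel_prob \<nu> \<Longrightarrow> frame_energy3 \<mu> \<le> frame_energy3 \<nu>"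
  shows "\<forall>x\<in>msupport \<mu>. \<exists>y\<in>msupport \<mu>. x \<bullet> y = 0"
proof
  fix x assume x: "x \<in> msupport \<mu>"
  show "\<exists>y\<in>msupport \<mu>. x \<bullet> y = 0"
  proof (rule ccontr)
    assume "\<not> (\<exists>y\<in>msupport \<mu>. x \<bullet> y = 0)"
    hence nz: "\<forall>y\<in>msupport \<mu>. x \<bullet> y \<noteq> 0" by auto
    interpret SB \<mu> by unfold_locales (rule assms(2))
    obtain \<nu> :: "'a measure" where nu: "sphere_borel_prob \<nu>" "frame_energy3 \<nu> = ennreal (1 / (real DIM('a))\<^sup>2)"
      using ONB by blast
    have E: "frame_energy3 \<mu> \<le> ennreal (1 / (real DIM('a))\<^sup>2)"
      using assms(3)[OF nu(1)] nu(2) by simp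
    show False by (rule final[OF E x nz assms(1)])
  qed
qed

end
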